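(* For $n\ge1$, $\left|\Pi_n\wr C_2(1^12^2,1^22^1)\right|=2^n+2(B(n)-1)$, where $B(n)$ is the $n$th Bell number.
   Context: For $n\ge0$ let $[n]=\{1,\dots,n\}$. A $2$-colored set partition of $[n]$ is a set partition of $[n]$ together with an assignment of a color from $\{1,2\}$ to each element; $\Pi_n\wr C_2$ is the set of these. For a set $S$ of patterns, $\Pi_n\wr C_2(S)$ is the set of such colored partitions avoiding every pattern in $S$ in the pattern sense. For the patterns used here: $\sigma$ contains $1^12^2$ iff there are $i<j$ in different blocks with $i$ colored $1$ and $j$ colored $2$; $\sigma$ contains $1^22^1$ iff there are $i<j$ in different blocks with $i$ colored $2$ and $j$ colored $1$. $B(n)$ is the number of set partitions of $[n]$. *)

theory Defs
  imports "HOL-Library.Disjoint_Sets" "HOL-Library.FuncSet"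
begin

definition set_partitions :: "nat \<Rightarrow> nat set set set" where
  "set_partitions n = {P. partition_on {1..n} P}"

definition Bell :: "nat \<Rightarrow> nat" where
  "Bell n = card (set_partitions n)"

definition colored_partitions :: "nat \<Rightarrow> (nat set set \<times> (nat \<Rightarrow> nat)) set" where
  "colored_partitions n =
     {(P, c). partition_on {1..n} P \<and> c \<in> {1..n} \<rightarrow>\<^sub>E {1, 2}}"

definition diff_blocks :: "nat set set \<Rightarrow> nat \<Rightarrow> nat \<Rightarrow> bool" where
  "diff_blocks P i j \<longleftrightarrow> \<not> (\<exists>B\<in>P. i \<in> B \<and> j \<in> B)"

text \<open>Containment of the pattern with colours a (on the smaller element) and b (on the larger)
  in different blocks: pattern 1^a 2^b.\<close>
definition contains_pat :: "nat \<Rightarrow> nat \<Rightarrow> nat \<Rightarrow> nat set set \<times> (nat \<Rightarrow> nat) \<Rightarrow> bool" where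
  "contains_pat n a b \<sigma> \<longleftrightarrow>
     (\<exists>i j. 1 \<le> i \<and> i < j \<and> j \<le> n \<and> diff_blocks (fst \<sigma>) i j \<and> snd \<sigma> i = a \<and> snd \<sigma> j = b)"

abbreviation contains_1_1_2_2 where "contains_1_1_2_2 n \<equiv> contains_pat n 1 2"
abbreviation contains_1_2_2_1 where "contains_1_2_2_1 n \<equiv> contains_pat n 2 1"

end

theory Submission
  imports Defs
begin

lemma single_block:
  assumes P: "partition_on {1..n} P"
    and x: "x \<in> {1..n}" and y: "y \<in> {1..n}"
    and xy: "\<not> diff_blocks P x y"
    and cover: "\<And>z. z \<in> {1..n} \<Longrightarrow> \<not> diff_blocks P x z \<or> \<not> diff_blocks P y z"
  shows "P = {{1..n}}"
proof -
  obtain B where B: "B \<in> P" "x \<in> B" "y \<in> B" using xy unfolding diff_blocks_def by blast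
  have Bsub: "B \<subseteq> {1..n}" using partition_onD1[OF P] B by blast
  have disj: "\<And>C D a. C \<in> P \<Longrightarrow> D \<in> P \<Longrightarrow> a \<in> C \<Longrightarrow> a \<in> D \<Longrightarrow> C = D"
    using partition_onD2[OF P] unfolding disjoint_def by blast
  have "{1..n} \<subseteq> B"
  proof
    fix z assume z: "z \<in> {1..n}"
    from cover[OF z] obtain C where C: "C \<in> P" "z \<in> C" "x \<in> C \<or> y \<in> C"
      unfolding diff_blocks_def by blast
    then have "C = B" using disj B by blast
    then show "z \<in> B" using C by simp
  qed
  with Bsub have BB: "B = {1..n}" by blast
  show ?thesis
  proof
    show "P \<subseteq> {{1..n}}"
    proof
      fix C assume C: "C \<in> P"
      then have "C \<noteq> {}" using partition_onD3[OF P] by blast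
      then obtain a where "a \<in> C" by blast
      moreover have "C \<subseteq> {1..n}" using partition_onD1[OF P] C by blast
      ultimately have "C = B" using disj[OF C B(1)] BB by blast
      then show "C \<in> {{1..n}}" using BB by simp
    qed
    show "{{1..n}} \<subseteq> P" using B(1) BB by simp
  qed
qed

theorem mainTheorem6:
  fixes n :: nat
  assumes "n \<ge> 1"
  shows "card {\<sigma> \<in> colored_partitions n.
                 \<not> contains_1_1_2_2 n \<sigma> \<and> \<not> contains_1_2_2_1 n \<sigma>}
         = 2 ^ n + 2 * (Bell n - 1)"
proof -
  define F where "F = ({1..n} \<rightarrow>\<^sub>E {1::nat, 2})"
  define k1 where "k1 = restrict (\<lambda>_. 1::nat) {1..n}"
  define k2 where "k2 = restrict (\<lambda>_. 2::nat) {1..n}"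
  define S where "S = {\<sigma> \<in> colored_partitions n.
                 \<not> contains_1_1_2_2 n \<sigma> \<and> \<not> contains_1_2_2_1 n \<sigma>}"
  have k12: "k1 \<noteq> k2"
  proof
    assume "k1 = k2"
    then have "k1 1 = k2 1" by simp
    then show False using assms unfolding k1_def k2_def by simp
  qed
  have kF: "k1 \<in> F" "k2 \<in> F" unfolding k1_def k2_def F_def by auto
  have seteq: "S = (set_partitions n \<times> {k1, k2}) \<union> ({{{1..n}}} \<times> (F - {k1, k2}))"
  proof (intro equalityI subsetI)
    fix \<sigma> assume s: "\<sigma> \<in> S"
    obtain P c where sig: "\<sigma> = (P, c)" by fastforce
    have P: "partition_on {1..n} P" and cF: "c \<in> F"
      using s unfolding S_def colored_partitions_def F_def sig by auto
    have av: "\<And>i j. i \<in> {1..n} \<Longrightarrow> j \<in> {1..n} \<Longrightarrow> c i \<noteq> c j \<Longrightarrow> \<not> diff_blocks P i j"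
    proof -
      fix i j assume ij: "i \<in> {1..n}" "j \<in> {1..n}" "c i \<noteq> c j"
      have ci: "c i \<in> {1,2}" "c j \<in> {1,2}" using cF ij unfolding F_def by auto
      have nc: "\<not> contains_pat n 1 2 (P, c)" "\<not> contains_pat n 2 1 (P, c)"
        using s unfolding S_def sig by auto
      have sym: "diff_blocks P i j = diff_blocks P j i" unfolding diff_blocks_def by blast
      show "\<not> diff_blocks P i j"
      proof
        assume d: "diff_blocks P i j"
        have "i \<noteq> j" using ij by auto
        then consider "i < j" | "j < i" by linarith
        then show False
        proof cases
          case 1
          have "contains_pat n (c i) (c j) (P, c)" unfolding contains_pat_def
            using 1 ij(1,2) d by auto
          with ci nc ij(3) show False by auto
        next
          case 2
          have "contains_pat n (c j) (c i) (P, c)" unfolding contains_pat_def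
            using 2 ij(1,2) d sym by auto
          with ci nc ij(3) show False by auto
        qed
      qed
    qed
    show "\<sigma> \<in> (set_partitions n \<times> {k1, k2}) \<union> ({{{1..n}}} \<times> (F - {k1, k2}))"
    proof (cases "c \<in> {k1, k2}")
      case True then show ?thesis using P sig unfolding set_partitions_def by auto
    next
      case False
      have ex1: "\<exists>x\<in>{1..n}. c x = 1"
      proof (rule ccontr)
        assume "\<not> ?thesis"
        then have "\<forall>x\<in>{1..n}. c x = 2" using cF unfolding F_def by fastforce
        then have "c = k2" using cF unfolding F_def k2_def
          by (auto simp: PiE_def extensional_def fun_eq_iff)
        then show False using False by simp
      qed
      have ex2: "\<exists>x\<in>{1..n}. c x = 2"
      proof (rule ccontr)
        assume "\<not> ?thesis"
        then have "\<forall>x\<in>{1..n}. c x = 1" using cF unfolding F_def by fastforce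
        then have "c = k1" using cF unfolding F_def k1_def
          by (auto simp: PiE_def extensional_def fun_eq_iff)
        then show False using False by simp
      qed
      obtain x y where x: "x \<in> {1..n}" "c x = 1" and y: "y \<in> {1..n}" "c y = 2"
        using ex1 ex2 by blast
      have "P = {{1..n}}"
      proof (rule single_block[OF P x(1) y(1)])
        show "\<not> diff_blocks P x y" using av x y by simp
        fix z assume z: "z \<in> {1..n}"
        have "c z \<in> {1,2}" using cF z unfolding F_def by auto
        then show "\<not> diff_blocks P x z \<or> \<not> diff_blocks P y z"
          using av[OF x(1) z] av[OF y(1) z] x y by auto
      qed
      then show ?thesis using sig cF False by auto
    qed
  next
    fix \<sigma> assume s: "\<sigma> \<in> (set_partitions n \<times> {k1, k2}) \<union> ({{{1..n}}} \<times> (F - {k1, k2}))"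
    obtain P c where sig: "\<sigma> = (P, c)" by (cases \<sigma>)
    have PcF: "partition_on {1..n} P \<and> c \<in> F"
    proof (cases "c \<in> {k1, k2}")
      case True
      then show ?thesis using s sig kF unfolding set_partitions_def by auto
    next
      case False
      then have Pc: "P = {{1..n}}" "c \<in> F" using s sig by auto
      have "{1..n} \<noteq> ({}::nat set)" using assms by simp
      then have "partition_on {1..n} {{1..n}}" by (rule partition_on_space)
      then show ?thesis using Pc by simp
    qed
    have nc: "\<not> contains_pat n a b (P, c)" if "a \<noteq> b" for a b
    proof
      assume "contains_pat n a b (P, c)"
      then obtain i j where ij: "1 \<le> i" "i < j" "j \<le> n" "c i = a" "c j = b"
        and d: "diff_blocks P i j"
        unfolding contains_pat_def by auto
      show False
      proof (cases "c \<in> {k1, k2}")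
        case True
        then have "c i = c j" using ij unfolding k1_def k2_def by auto
        then show False using ij that by simp
      next
        case False
        then have Pc: "P = {{1..n}}" using s sig by auto
        then show False using d ij unfolding diff_blocks_def by auto
      qed
    qed
    show "\<sigma> \<in> S" unfolding S_def colored_partitions_def F_def sig
      using PcF nc[of 1 2] nc[of 2 1] unfolding F_def by simp
  qed
  have finP: "finite (set_partitions n)"
    unfolding set_partitions_def by (rule finitely_many_partition_on) simp
  have finF: "finite F" unfolding F_def by (simp add: finite_PiE)
  have cardF: "card F = 2 ^ n" unfolding F_def by (simp add: card_PiE eval_nat_numeral)
  have Bpos: "Bell n \<ge> 1"
  proof -
    have "{{1..n}} \<in> set_partitions n"
      unfolding set_partitions_def using assms partition_on_space[of "{1..n}"] by simp
    then have "set_partitions n \<noteq> {}" by blast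
    then show ?thesis unfolding Bell_def using finP by (simp add: Suc_le_eq card_gt_0_iff)
  qed
  have disj: "(set_partitions n \<times> {k1, k2}) \<inter> ({{{1..n}}} \<times> (F - {k1, k2})) = {}" by auto
  have "card S = card (set_partitions n \<times> {k1, k2}) + card ({{{1..n}}} \<times> (F - {k1, k2}))"
    unfolding seteq by (rule card_Un_disjoint) (use finP finF disj in simp_all)
  also have "\<dots> = Bell n * 2 + (2 ^ n - 2)"
    using k12 kF finF cardF by (simp add: card_cartesian_product Bell_def card_Diff_subset)
  also have "\<dots> = 2 ^ n + 2 * (Bell n - 1)"
  proof -
    have "(2::nat) ^ n \<ge> 2" using assms
      using power_increasing[of 1 n "2::nat"] by simp
    then show ?thesis using Bpos by simp
  qed
  finally show ?thesis unfolding S_def .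
qed

end
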